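(* Let $G$ and $H$ be finite simple graphs with $\delta(G)\le\delta(H)$. Let $S$ be a minimum edge-cut in $G\times H$ and let $B,W$ be the connected components of $(G\times H)-S$. If for every $(x,y)\in V(G\times H)$ either $N_G(x)\times\{y\}\subseteq B$ or $N_G(x)\times\{y\}\subseteq W$, then $S$ is of type 2, 4, 6 or 8.
   Context: The direct product $G\times H$ has vertex set $V(G)\times V(H)$, with $(x_1,y_1)$ adjacent to $(x_2,y_2)$ if and only if $x_1x_2\in E(G)$ and $y_1y_2\in E(H)$. $\delta(F)$ is the minimum degree of $F$ and $N_G(x)$ the open neighbourhood of $x$ in $G$. For a minimum edge-cut $S$ of $G\times H$, $B$ (black) and $W$ (white) are the two connected components of $(G\times H)-S$. The types are the following shapes of $(B,W)$ (up to interchanging $B$ and $W$), all partitions being disjoint unions: Type 2: $B=V(G)\times B'$, $W=V(G)\times W'$ with $V(H)=B'\cup W'$. Type 4: $V(G)=X_1\cup X_2$, $V(H)=Y_1\cup Y_2$, $B=(X_1\times Y_1)\cup(X_2\times Y_2)$, $W=(X_1\times Y_2)\cup(X_2\times Y_1)$. Type 6: $V(G)=X\cup Y$, $V(H)=C_1\cup C_2\cup C_3$, $B=(X\times C_1)\cup(Y\times C_2)$, $W=(X\times C_2)\cup(Y\times C_1)\cup(V(G)\times C_3)$. Type 8: $V(G)=X\cup Y$, $V(H)=C_1\cup C_2\cup C_3\cup C_4$, $B=(X\times C_1)\cup(Y\times C_2)\cup(V(G)\times C_4)$, $W=(X\times C_2)\cup(Y\times C_1)\cup(V(G)\times C_3)$.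 (In the paper these types are given by a figure: in types 6 and 8 each $G$-layer $V(G)\times\{y\}$ is either monochromatic or split along a fixed partition $X\cup Y$ of $V(G)$.) *)

theory Defs
  imports Main
begin

definition sgraph :: "'v set \<Rightarrow> ('v \<Rightarrow> 'v \<Rightarrow> bool) \<Rightarrow> bool" where
  "sgraph V E \<longleftrightarrow> finite V \<and> (\<forall>u v. E u v \<longrightarrow> u \<in> V \<and> v \<in> V)
     \<and> (\<forall>u v. E u v \<longrightarrow> E v u) \<and> (\<forall>u. \<not> E u u)"

definition nbhd :: "'v set \<Rightarrow> ('v \<Rightarrow> 'v \<Rightarrow> bool) \<Rightarrow> 'v \<Rightarrow> 'v set" where
  "nbhd V E x = {y \<in> V. E x y}"

definition min_degree :: "'v set \<Rightarrow> ('v \<Rightarrow> 'v \<Rightarrow> bool) \<Rightarrow> nat" where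
  "min_degree V E = Min ((\<lambda>x. card (nbhd V E x)) ` V)"

definition edges :: "'v set \<Rightarrow> ('v \<Rightarrow> 'v \<Rightarrow> bool) \<Rightarrow> 'v set set" where
  "edges V E = {{u, v} | u v. u \<in> V \<and> v \<in> V \<and> E u v}"

definition del_edges :: "('v \<Rightarrow> 'v \<Rightarrow> bool) \<Rightarrow> 'v set set \<Rightarrow> 'v \<Rightarrow> 'v \<Rightarrow> bool" where
  "del_edges E S = (\<lambda>u v. E u v \<and> {u, v} \<notin> S)"

definition connected_graph :: "'v set \<Rightarrow> ('v \<Rightarrow> 'v \<Rightarrow> bool) \<Rightarrow> bool" where
  "connected_graph V E \<longleftrightarrow> (\<forall>u\<in>V. \<forall>v\<in>V. E\<^sup>*\<^sup>* u v)"

definition is_edge_cut :: "'v set \<Rightarrow> ('v \<Rightarrow> 'v \<Rightarrow> bool) \<Rightarrow> 'v set set \<Rightarrow> bool" where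
  "is_edge_cut V E S \<longleftrightarrow> S \<subseteq> edges V E \<and> \<not> connected_graph V (del_edges E S)"

definition is_min_edge_cut :: "'v set \<Rightarrow> ('v \<Rightarrow> 'v \<Rightarrow> bool) \<Rightarrow> 'v set set \<Rightarrow> bool" where
  "is_min_edge_cut V E S \<longleftrightarrow> is_edge_cut V E S \<and> (\<forall>T. is_edge_cut V E T \<longrightarrow> card S \<le> card T)"

definition is_component :: "'v set \<Rightarrow> ('v \<Rightarrow> 'v \<Rightarrow> bool) \<Rightarrow> 'v set \<Rightarrow> bool" where
  "is_component V E C \<longleftrightarrow> C \<noteq> {} \<and> C \<subseteq> V \<and> (\<forall>u\<in>C. \<forall>v\<in>C. E\<^sup>*\<^sup>* u v)
     \<and> (\<forall>u\<in>C. \<forall>v. E\<^sup>*\<^sup>* u v \<longrightarrow> v \<in> C)"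

definition prod_adj :: "('a \<Rightarrow> 'a \<Rightarrow> bool) \<Rightarrow> ('b \<Rightarrow> 'b \<Rightarrow> bool) \<Rightarrow> 'a \<times> 'b \<Rightarrow> 'a \<times> 'b \<Rightarrow> bool" where
  "prod_adj EG EH = (\<lambda>(x1, y1) (x2, y2). EG x1 x2 \<and> EH y1 y2)"

text \<open>The types of the partition (B,W), in this order (the caller symmetrizes).
  All unions are disjoint unions; parts may be empty.\<close>
definition type2 :: "'a set \<Rightarrow> 'b set \<Rightarrow> ('a \<times> 'b) set \<Rightarrow> ('a \<times> 'b) set \<Rightarrow> bool" where
  "type2 VG VH B W \<longleftrightarrow> (\<exists>B' W'. VH = B' \<union> W' \<and> B' \<inter> W' = {}
     \<and> B = VG \<times> B' \<and> W = VG \<times> W')"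

definition type4 :: "'a set \<Rightarrow> 'b set \<Rightarrow> ('a \<times> 'b) set \<Rightarrow> ('a \<times> 'b) set \<Rightarrow> bool" where
  "type4 VG VH B W \<longleftrightarrow> (\<exists>X1 X2 Y1 Y2. VG = X1 \<union> X2 \<and> X1 \<inter> X2 = {}
     \<and> VH = Y1 \<union> Y2 \<and> Y1 \<inter> Y2 = {}
     \<and> B = (X1 \<times> Y1) \<union> (X2 \<times> Y2) \<and> W = (X1 \<times> Y2) \<union> (X2 \<times> Y1))"

definition type6 :: "'a set \<Rightarrow> 'b set \<Rightarrow> ('a \<times> 'b) set \<Rightarrow> ('a \<times> 'b) set \<Rightarrow> bool" where
  "type6 VG VH B W \<longleftrightarrow> (\<exists>X Y C1 C2 C3. VG = X \<union> Y \<and> X \<inter> Y = {}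
     \<and> VH = C1 \<union> C2 \<union> C3 \<and> C1 \<inter> C2 = {} \<and> C1 \<inter> C3 = {} \<and> C2 \<inter> C3 = {}
     \<and> B = (X \<times> C1) \<union> (Y \<times> C2) \<and> W = (X \<times> C2) \<union> (Y \<times> C1) \<union> (VG \<times> C3))"

definition type8 :: "'a set \<Rightarrow> 'b set \<Rightarrow> ('a \<times> 'b) set \<Rightarrow> ('a \<times> 'b) set \<Rightarrow> bool" where
  "type8 VG VH B W \<longleftrightarrow> (\<exists>X Y C1 C2 C3 C4. VG = X \<union> Y \<and> X \<inter> Y = {}
     \<and> VH = C1 \<union> C2 \<union> C3 \<union> C4 \<and> C1 \<inter> C2 = {} \<and> C1 \<inter> C3 = {} \<and> C1 \<inter> C4 = {}
     \<and> C2 \<inter> C3 = {} \<and> C2 \<inter> C4 = {} \<and> C3 \<inter> C4 = {}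
     \<and> B = (X \<times> C1) \<union> (Y \<times> C2) \<union> (VG \<times> C4) \<and> W = (X \<times> C2) \<union> (Y \<times> C1) \<union> (VG \<times> C3))"

end

theory Submission
  imports Defs
begin

lemma type8_intro:
  assumes "VG = X \<union> Y" "X \<inter> Y = {}" "B \<inter> W = {}" "B \<union> W = VG \<times> VH"
    and "\<forall>y\<in>VH. (\<forall>x\<in>VG. (x,y)\<in>B) \<or> (\<forall>x\<in>VG. (x,y)\<in>W)
       \<or> ((\<forall>x\<in>X. (x,y)\<in>B) \<and> (\<forall>x\<in>Y. (x,y)\<in>W))
       \<or> ((\<forall>x\<in>X. (x,y)\<in>W) \<and> (\<forall>x\<in>Y. (x,y)\<in>B))"
  shows "type8 VG VH B W"
proof -
  define C4 where "C4 = {y\<in>VH. \<forall>x\<in>VG. (x,y)\<in>B}"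
  define C3 where "C3 = {y\<in>VH. (\<forall>x\<in>VG. (x,y)\<in>W) \<and> y \<notin> C4}"
  define C1 where "C1 = {y\<in>VH. y \<notin> C3 \<and> y \<notin> C4 \<and> (\<forall>x\<in>X. (x,y)\<in>B) \<and> (\<forall>x\<in>Y. (x,y)\<in>W)}"
  define C2 where "C2 = {y\<in>VH. y \<notin> C1 \<and> y \<notin> C3 \<and> y \<notin> C4}"
  have VH: "VH = C1 \<union> C2 \<union> C3 \<union> C4" unfolding C1_def C2_def C3_def C4_def by auto
  have d: "C1 \<inter> C2 = {}" "C1 \<inter> C3 = {}" "C1 \<inter> C4 = {}" "C2 \<inter> C3 = {}" "C2 \<inter> C4 = {}" "C3 \<inter> C4 = {}"
    unfolding C1_def C2_def C3_def C4_def by auto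
  have c2: "\<And>y. y \<in> C2 \<Longrightarrow> (\<forall>x\<in>X. (x,y)\<in>W) \<and> (\<forall>x\<in>Y. (x,y)\<in>B)"
    using assms(5) unfolding C1_def C2_def C3_def C4_def by auto
  have mem: "\<And>x y. (x,y) \<in> B \<or> (x,y) \<in> W \<Longrightarrow> x \<in> VG \<and> y \<in> VH" using assms(4) by auto
  have eB: "B = (X \<times> C1) \<union> (Y \<times> C2) \<union> (VG \<times> C4)"
  proof (intro set_eqI iffI)
    fix p assume p: "p \<in> B"
    obtain x y where pxy: "p = (x,y)" by (cases p)
    have xy: "x \<in> VG" "y \<in> VH" using mem p pxy by auto
    show "p \<in> (X \<times> C1) \<union> (Y \<times> C2) \<union> (VG \<times> C4)"
    proof -
      have "y \<in> C1 \<or> y \<in> C2 \<or> y \<in> C3 \<or> y \<in> C4" using VH xy by auto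
      moreover have "y \<notin> C3" using p pxy xy assms(3) unfolding C3_def by auto
      moreover have "y \<in> C1 \<Longrightarrow> x \<in> X" using p pxy xy assms(1,3) unfolding C1_def by auto
      moreover have "y \<in> C2 \<Longrightarrow> x \<in> Y" using c2[of y] p pxy xy assms(1,3) by auto
      ultimately show ?thesis using pxy xy by auto
    qed
  next
    fix p assume "p \<in> (X \<times> C1) \<union> (Y \<times> C2) \<union> (VG \<times> C4)"
    then show "p \<in> B" using c2 unfolding C1_def C4_def by auto
  qed
  have eW: "W = (X \<times> C2) \<union> (Y \<times> C1) \<union> (VG \<times> C3)"
  proof (intro set_eqI iffI)
    fix p assume p: "p \<in> W"
    obtain x y where pxy: "p = (x,y)" by (cases p)
    have xy: "x \<in> VG" "y \<in> VH" using mem p pxy by auto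
    show "p \<in> (X \<times> C2) \<union> (Y \<times> C1) \<union> (VG \<times> C3)"
    proof -
      have "y \<in> C1 \<or> y \<in> C2 \<or> y \<in> C3 \<or> y \<in> C4" using VH xy by auto
      moreover have "y \<notin> C4" using p pxy xy assms(3) unfolding C4_def by auto
      moreover have "y \<in> C1 \<Longrightarrow> x \<in> Y" using p pxy xy assms(1,3) unfolding C1_def by auto
      moreover have "y \<in> C2 \<Longrightarrow> x \<in> X" using c2[of y] p pxy xy assms(1,3) by auto
      ultimately show ?thesis using pxy xy by auto
    qed
  next
    fix p assume "p \<in> (X \<times> C2) \<union> (Y \<times> C1) \<union> (VG \<times> C3)"
    then show "p \<in> W" using c2 unfolding C1_def C3_def by auto
  qed
  show ?thesis unfolding type8_def
    by (rule exI[of _ X], rule exI[of _ Y], rule exI[of _ C1], rule exI[of _ C2],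
        rule exI[of _ C3], rule exI[of _ C4]) (use assms(1,2) VH d eB eW in blast)
qed

definition cn :: "('v \<Rightarrow> 'v \<Rightarrow> bool) \<Rightarrow> 'v \<Rightarrow> 'v \<Rightarrow> bool" where
  "cn E u v = (\<exists>m. E m u \<and> E m v)"

lemma rtr_sym:
  assumes sym: "\<And>u v. E u v \<Longrightarrow> E v u" and "E\<^sup>*\<^sup>* u v"
  shows "E\<^sup>*\<^sup>* v u"
  using assms(2)
proof (induction rule: rtranclp_induct)
  case base then show ?case by simp
next
  case (step y z)
  have "E z y" using sym step(2) .
  then show ?case using converse_rtranclp_into_rtranclp[OF _ step.IH] by simp
qed

lemma walk_parity:
  assumes sym: "\<And>u v. E u v \<Longrightarrow> E v u" and "E\<^sup>*\<^sup>* x0 v"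
  shows "(cn E)\<^sup>*\<^sup>* x0 v \<or> (\<exists>u. (cn E)\<^sup>*\<^sup>* x0 u \<and> E u v)"
  using assms(2)
proof (induction rule: rtranclp_induct)
  case base then show ?case by simp
next
  case (step y z)
  from step.IH show ?case
  proof
    assume "(cn E)\<^sup>*\<^sup>* x0 y" then show ?thesis using step(2) by blast
  next
    assume "\<exists>u. (cn E)\<^sup>*\<^sup>* x0 u \<and> E u y"
    then obtain u where hu: "(cn E)\<^sup>*\<^sup>* x0 u" "E u y" by blast
    have "E y u" using sym hu(2) .
    then have st: "cn E u z" unfolding cn_def using step(2) by blast
    have "(cn E)\<^sup>*\<^sup>* x0 z" using rtranclp.rtrancl_into_rtrancl[OF hu(1) st] .
    then show ?thesis by (rule disjI1)
  qed
qed

lemma odd_odd: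
  assumes sym: "\<And>u v. E u v \<Longrightarrow> E v u" and "(cn E)\<^sup>*\<^sup>* a b"
  shows "E a p \<Longrightarrow> E b q \<Longrightarrow> (cn E)\<^sup>*\<^sup>* p q"
  using assms(2)
proof (induction arbitrary: q rule: rtranclp_induct)
  case base
  have "cn E p q" unfolding cn_def using base by blast
  then show ?case by simp
next
  case (step b c)
  from step(2) obtain m where m: "E m b" "E m c" unfolding cn_def by blast
  have "E b m" using sym m(1) .
  have pm: "(cn E)\<^sup>*\<^sup>* p m" using step.IH[OF step.prems(1) \<open>E b m\<close>] .
  have "E c m" using sym m(2) .
  then have "cn E m q" unfolding cn_def using step.prems(2) by blast
  then show ?case using rtranclp.rtrancl_into_rtrancl[OF pm] by simp
qed

lemma proj_walk:
  assumes "(del_edges (prod_adj EG EH) S)\<^sup>*\<^sup>* p q"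
  shows "EG\<^sup>*\<^sup>* (fst p) (fst q)"
  using assms
proof (induction rule: rtranclp_induct)
  case base then show ?case by simp
next
  case (step y z)
  obtain y1 y2 z1 z2 where yz: "y = (y1,y2)" "z = (z1,z2)" by (cases y, cases z) 
  have "EG y1 z1" using step(2) unfolding yz del_edges_def prod_adj_def by simp
  then show ?case using step.IH yz by (simp add: rtranclp.rtrancl_into_rtrancl)
qed

lemma disc_case:
  assumes symG: "\<And>u v. EG u v \<Longrightarrow> EG v u"
    and cB: "is_component (VG \<times> VH) (del_edges (prod_adj EG EH) S) B"
    and cW: "is_component (VG \<times> VH) (del_edges (prod_adj EG EH) S) W"
    and cov: "VG \<times> VH = B \<union> W"
    and a: "a \<in> VG" and b: "b \<in> VG" and nab: "\<not> EG\<^sup>*\<^sup>* a b"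
    and ay: "(a,y0) \<in> B" and y0: "y0 \<in> VH"
  shows "B = {x\<in>VG. EG\<^sup>*\<^sup>* a x} \<times> VH \<and> W = (VG - {x\<in>VG. EG\<^sup>*\<^sup>* a x}) \<times> VH"
proof -
  have B1: "EG\<^sup>*\<^sup>* a (fst q)" if q: "q \<in> B" for q
  proof -
    have "(del_edges (prod_adj EG EH) S)\<^sup>*\<^sup>* (a,y0) q" using cB ay q unfolding is_component_def by blast
    from proj_walk[OF this] show ?thesis by simp
  qed
  have "(b,y0) \<notin> B" using B1[of "(b,y0)"] nab by auto
  then have bW: "(b,y0) \<in> W" using cov b y0 by auto
  have W1: "\<And>q. q \<in> W \<Longrightarrow> \<not> EG\<^sup>*\<^sup>* a (fst q)"
  proof
    fix q assume q: "q \<in> W" "EG\<^sup>*\<^sup>* a (fst q)"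
    have "(del_edges (prod_adj EG EH) S)\<^sup>*\<^sup>* (b,y0) q" using cW bW q(1) unfolding is_component_def by blast
    from proj_walk[OF this] have "EG\<^sup>*\<^sup>* b (fst q)" by simp
    then have "EG\<^sup>*\<^sup>* (fst q) b" using rtr_sym[of EG, OF symG] by blast
    then show False using q(2) nab by (meson rtranclp_trans)
  qed
  have sB: "B \<subseteq> VG \<times> VH" "W \<subseteq> VG \<times> VH" using cB cW unfolding is_component_def by auto
  show ?thesis
  proof
    show "B = {x\<in>VG. EG\<^sup>*\<^sup>* a x} \<times> VH"
    proof (intro set_eqI iffI)
      fix p assume "p \<in> B" then show "p \<in> {x\<in>VG. EG\<^sup>*\<^sup>* a x} \<times> VH" using B1 sB by force
    next
      fix p assume p: "p \<in> {x\<in>VG. EG\<^sup>*\<^sup>* a x} \<times> VH"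
      then have "p \<in> B \<union> W" using cov by auto
      then show "p \<in> B" using W1 p by (cases p) auto
    qed
  next
    show "W = (VG - {x\<in>VG. EG\<^sup>*\<^sup>* a x}) \<times> VH"
    proof (intro set_eqI iffI)
      fix p assume "p \<in> W" then show "p \<in> (VG - {x\<in>VG. EG\<^sup>*\<^sup>* a x}) \<times> VH" using W1 sB by force
    next
      fix p assume p: "p \<in> (VG - {x\<in>VG. EG\<^sup>*\<^sup>* a x}) \<times> VH"
      then have "p \<in> B \<union> W" using cov by auto
      then show "p \<in> W" using B1 p by (cases p) auto
    qed
  qed
qed


theorem corollary2p8:
  fixes VG :: "'a set" and EG :: "'a \<Rightarrow> 'a \<Rightarrow> bool"
    and VH :: "'b set" and EH :: "'b \<Rightarrow> 'b \<Rightarrow> bool"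
    and S :: "('a \<times> 'b) set set" and B W :: "('a \<times> 'b) set"
  assumes "sgraph VG EG" and "sgraph VH EH"
    and "min_degree VG EG \<le> min_degree VH EH"
    and "is_min_edge_cut (VG \<times> VH) (prod_adj EG EH) S"
    and "is_component (VG \<times> VH) (del_edges (prod_adj EG EH) S) B"
    and "is_component (VG \<times> VH) (del_edges (prod_adj EG EH) S) W"
    and "B \<noteq> W" and "VG \<times> VH = B \<union> W"
    and "\<forall>x\<in>VG. \<forall>y\<in>VH. nbhd VG EG x \<times> {y} \<subseteq> B \<or> nbhd VG EG x \<times> {y} \<subseteq> W"
  shows "type2 VG VH B W \<or> type2 VG VH W B \<or> type4 VG VH B W \<or> type4 VG VH W B
       \<or> type6 VG VH B W \<or> type6 VG VH W B \<or> type8 VG VH B W \<or> type8 VG VH W B"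
proof -
  note cB = assms(5) and cW = assms(6) and cov = assms(8) and hyp = assms(9)
  have symG: "\<And>u v. EG u v \<Longrightarrow> EG v u" and EV: "\<And>u v. EG u v \<Longrightarrow> u \<in> VG \<and> v \<in> VG"
    using assms(1) unfolding sgraph_def by blast+
  obtain p0 where p0: "p0 \<in> B" using cB unfolding is_component_def by blast
  define x0 where "x0 = fst p0"
  define y0 where "y0 = snd p0"
  have x0: "x0 \<in> VG" and y0: "y0 \<in> VH" using p0 cB unfolding is_component_def x0_def y0_def by auto
  have disj: "B \<inter> W = {}"
  proof (rule ccontr)
    assume "B \<inter> W \<noteq> {}"
    then obtain p where p: "p \<in> B" "p \<in> W" by blast
    have cl: "\<And>C u v. is_component (VG \<times> VH) (del_edges (prod_adj EG EH) S) C \<Longrightarrow> u \<in> C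
       \<Longrightarrow> (del_edges (prod_adj EG EH) S)\<^sup>*\<^sup>* u v \<Longrightarrow> v \<in> C"
      unfolding is_component_def by blast
    have cn2: "\<And>C u v. is_component (VG \<times> VH) (del_edges (prod_adj EG EH) S) C \<Longrightarrow> u \<in> C
       \<Longrightarrow> v \<in> C \<Longrightarrow> (del_edges (prod_adj EG EH) S)\<^sup>*\<^sup>* u v"
      unfolding is_component_def by blast
    have "B \<subseteq> W" using cl[OF cW p(2)] cn2[OF cB p(1)] by blast
    moreover have "W \<subseteq> B" using cl[OF cB p(1)] cn2[OF cW p(2)] by blast
    ultimately show False using assms(7) by blast
  qed
  have cov': "B \<union> W = VG \<times> VH" using cov by simp
  have t8: "type8 VG VH B W \<or> type8 VG VH W B"
  proof (cases "connected_graph VG EG")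
    case False
    then obtain a b where ab: "a \<in> VG" "b \<in> VG" "\<not> EG\<^sup>*\<^sup>* a b" unfolding connected_graph_def by blast
    define K where "K = {x\<in>VG. EG\<^sup>*\<^sup>* a x}"
    have "(a,y0) \<in> B \<or> (a,y0) \<in> W" using cov ab y0 by auto
    then show ?thesis
    proof
      assume "(a,y0) \<in> B"
      then have e: "B = K \<times> VH \<and> W = (VG - K) \<times> VH"
        using disc_case[OF symG cB cW cov ab _ y0] unfolding K_def by blast
      have "type8 VG VH B W"
        by (rule type8_intro[of VG K "VG - K"]) (use e disj cov' K_def in auto)
      then show ?thesis by blast
    next
      assume "(a,y0) \<in> W"
      then have e: "W = K \<times> VH \<and> B = (VG - K) \<times> VH"
        using disc_case[OF symG cW cB _ ab _ y0] cov unfolding K_def by blast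
      have "type8 VG VH B W"
        by (rule type8_intro[of VG "VG - K" K]) (use e disj cov' K_def in auto)
      then show ?thesis by blast
    qed
  next
    case True
    have col: "\<And>u v y. (cn EG)\<^sup>*\<^sup>* u v \<Longrightarrow> u \<in> VG \<Longrightarrow> y \<in> VH \<Longrightarrow> v \<in> VG \<and> ((u,y) \<in> B \<longleftrightarrow> (v,y) \<in> B)"
    proof -
      fix u v y assume r: "(cn EG)\<^sup>*\<^sup>* u v" and u: "u \<in> VG" and y: "y \<in> VH"
      from r show "v \<in> VG \<and> ((u,y) \<in> B \<longleftrightarrow> (v,y) \<in> B)"
      proof (induction rule: rtranclp_induct)
        case base then show ?case using u by simp
      next
        case (step v w)
        then obtain m where m: "EG m v" "EG m w" unfolding cn_def by blast
        have mv: "m \<in> VG" "v \<in> nbhd VG EG m" "w \<in> nbhd VG EG m"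
          using m EV unfolding nbhd_def by auto
        have "nbhd VG EG m \<times> {y} \<subseteq> B \<or> nbhd VG EG m \<times> {y} \<subseteq> W" using hyp mv y by blast
        then have "((v,y) \<in> B \<longleftrightarrow> (w,y) \<in> B)" using mv disj by blast
        then show ?case using step.IH mv unfolding nbhd_def by blast
      qed
    qed
    have inBW: "\<And>x y. x \<in> VG \<Longrightarrow> y \<in> VH \<Longrightarrow> (x,y) \<in> W \<longleftrightarrow> (x,y) \<notin> B"
      using cov disj by blast
    show ?thesis
    proof (cases "\<exists>w0. EG x0 w0")
      case True
      then obtain w0 where w0: "EG x0 w0" by blast
      have w0V: "w0 \<in> VG" using EV w0 by blast
      define X where "X = {v\<in>VG. (cn EG)\<^sup>*\<^sup>* x0 v}"
      have Yw: "\<And>v. v \<in> VG - X \<Longrightarrow> (cn EG)\<^sup>*\<^sup>* w0 v"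
      proof -
        fix v assume v: "v \<in> VG - X"
        then have "EG\<^sup>*\<^sup>* x0 v" using \<open>connected_graph VG EG\<close> x0 unfolding connected_graph_def by blast
        then have "(cn EG)\<^sup>*\<^sup>* x0 v \<or> (\<exists>u. (cn EG)\<^sup>*\<^sup>* x0 u \<and> EG u v)"
          using walk_parity[of EG x0 v] symG by blast
        then obtain u where "(cn EG)\<^sup>*\<^sup>* x0 u" "EG u v" using v unfolding X_def by blast
        then show "(cn EG)\<^sup>*\<^sup>* w0 v" using odd_odd[of EG x0 u w0 v] symG w0 by blast
      qed
      have "type8 VG VH B W"
      proof (rule type8_intro[of VG X "VG - X"])
        show "\<forall>y\<in>VH. (\<forall>x\<in>VG. (x,y)\<in>B) \<or> (\<forall>x\<in>VG. (x,y)\<in>W)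
           \<or> ((\<forall>x\<in>X. (x,y)\<in>B) \<and> (\<forall>x\<in>VG - X. (x,y)\<in>W))
           \<or> ((\<forall>x\<in>X. (x,y)\<in>W) \<and> (\<forall>x\<in>VG - X. (x,y)\<in>B))"
        proof
          fix y assume y: "y \<in> VH"
          have cX: "\<And>x. x \<in> X \<Longrightarrow> (x,y) \<in> B \<longleftrightarrow> (x0,y) \<in> B" using col x0 y unfolding X_def by blast
          have cY: "\<And>x. x \<in> VG - X \<Longrightarrow> (x,y) \<in> B \<longleftrightarrow> (w0,y) \<in> B" using col w0V y Yw by blast
          have XV: "X \<subseteq> VG" unfolding X_def by blast
          show "(\<forall>x\<in>VG. (x,y)\<in>B) \<or> (\<forall>x\<in>VG. (x,y)\<in>W)
           \<or> ((\<forall>x\<in>X. (x,y)\<in>B) \<and> (\<forall>x\<in>VG - X. (x,y)\<in>W))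
           \<or> ((\<forall>x\<in>X. (x,y)\<in>W) \<and> (\<forall>x\<in>VG - X. (x,y)\<in>B))"
            using cX cY inBW[OF _ y] XV by (cases "(x0,y) \<in> B"; cases "(w0,y) \<in> B") blast+
        qed
      qed (use disj cov' X_def in auto)
      then show ?thesis by blast
    next
      case False
      have VG1: "VG = {x0}"
      proof
        show "{x0} \<subseteq> VG" using x0 by blast
        show "VG \<subseteq> {x0}"
        proof
          fix v assume "v \<in> VG"
          then have "EG\<^sup>*\<^sup>* x0 v" using \<open>connected_graph VG EG\<close> x0 unfolding connected_graph_def by blast
          then show "v \<in> {x0}" using False by (cases rule: converse_rtranclpE) auto
        qed
      qed
      have "type8 VG VH B W"
      proof (rule type8_intro[of VG VG "{}"])
        show "\<forall>y\<in>VH. (\<forall>x\<in>VG. (x,y)\<in>B) \<or> (\<forall>x\<in>VG. (x,y)\<in>W)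
           \<or> ((\<forall>x\<in>VG. (x,y)\<in>B) \<and> (\<forall>x\<in>{}. (x,y)\<in>W))
           \<or> ((\<forall>x\<in>VG. (x,y)\<in>W) \<and> (\<forall>x\<in>{}. (x,y)\<in>B))"
          using cov VG1 by blast
      qed (use disj cov' in auto)
      then show ?thesis by blast
    qed
  qed
  then show ?thesis by blast
qed

end
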